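(* Let $m$ be a positive integer and let $Q_1,\dots,Q_m$ be the partition of $\{0,1,\dots,m+1\}^3$ given by $(x,y,z)\in Q_i \iff f(x,y,z)=i$, where $f$ is defined below. Then for every $1\le i<j\le m$ and every unit vector $v\in\mathbb{Z}^3$ parallel to a coordinate axis, the sets $Q_i+(m+2)v$ and $Q_j$ are adjacent (i.e. the partition is externally adjacent).
   Context: Define $f:\{0,\dots,m+1\}^3\to\{1,\dots,m\}$ by: $f(x,y,z)=y$ if $0\le x\le m$, $1\le y\le m$, $z=0$; $f(x,y,z)=x$ if $1\le x\le m$, $0\le y\le m$, $z=m+1$; $f(x,y,z)=y$ if $x=0$, $1\le y\le m$, $1\le z\le m$; $f(x,y,z)=x$ if $1\le x\le m$, $y=0$, $1\le z\le m$; $f(x,y,z)=z$ if $1\le x\le m+1$, $1\le y\le m+1$, $1\le z\le m$; and $f(x,y,z)=1$ for all remaining points. Two disjoint sets $P,Q\subset\mathbb{Z}^3$ are adjacent if there exist $p\in P$, $q\in Q$ and a unit vector $v$ parallel to a coordinate axis with $p+v=q$. *)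

theory Defs
  imports Main
begin

type_synonym pt = "int \<times> int \<times> int"

definition fcol :: "int \<Rightarrow> pt \<Rightarrow> int" where
  "fcol m p = (case p of (x, y, z) \<Rightarrow>
     if 0 \<le> x \<and> x \<le> m \<and> 1 \<le> y \<and> y \<le> m \<and> z = 0 then y
     else if 1 \<le> x \<and> x \<le> m \<and> 0 \<le> y \<and> y \<le> m \<and> z = m + 1 then x
     else if x = 0 \<and> 1 \<le> y \<and> y \<le> m \<and> 1 \<le> z \<and> z \<le> m then y
     else if 1 \<le> x \<and> x \<le> m \<and> y = 0 \<and> 1 \<le> z \<and> z \<le> m then x
     else if 1 \<le> x \<and> x \<le> m + 1 \<and> 1 \<le> y \<and> y \<le> m + 1 \<and> 1 \<le> z \<and> z \<le> m then z
     else 1)"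

definition cube :: "int \<Rightarrow> pt set" where
  "cube m = {0..m+1} \<times> {0..m+1} \<times> {0..m+1}"

definition Qpart :: "int \<Rightarrow> int \<Rightarrow> pt set" where
  "Qpart m i = {p \<in> cube m. fcol m p = i}"

definition unit_vecs :: "pt set" where
  "unit_vecs = {(1,0,0), (-1,0,0), (0,1,0), (0,-1,0), (0,0,1), (0,0,-1)}"

definition padd :: "pt \<Rightarrow> pt \<Rightarrow> pt" where
  "padd p q = (fst p + fst q, fst (snd p) + fst (snd q), snd (snd p) + snd (snd q))"

definition pscale :: "int \<Rightarrow> pt \<Rightarrow> pt" where
  "pscale c p = (c * fst p, c * fst (snd p), c * snd (snd p))"

definition translate :: "pt set \<Rightarrow> pt \<Rightarrow> pt set" where
  "translate P w = (\<lambda>p. padd p w) ` P"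

definition adjacent :: "pt set \<Rightarrow> pt set \<Rightarrow> bool" where
  "adjacent P Q \<longleftrightarrow> P \<inter> Q = {} \<and>
     (\<exists>p\<in>P. \<exists>q\<in>Q. \<exists>v\<in>unit_vecs. padd p v = q)"

end

theory Submission
  imports Defs
begin

lemma adjI:
  assumes "P \<inter> Q = {}" "p \<in> P" "q \<in> Q" "e \<in> unit_vecs" "padd p e = q"
  shows "adjacent P Q"
  using assms unfolding adjacent_def by blast

lemma disj:
  assumes "v \<in> unit_vecs" "m \<ge> 1"
  shows "translate (Qpart m i) (pscale (m + 2) v) \<inter> Qpart m j = {}"
  using assms unfolding translate_def Qpart_def cube_def unit_vecs_def padd_def pscale_def
  by auto

lemma trI:
  assumes "p \<in> Qpart m i" "q = padd p w"
  shows "q \<in> translate (Qpart m i) w"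
  using assms unfolding translate_def by blast

lemma inQ:
  assumes "p \<in> cube m" "fcol m p = i"
  shows "p \<in> Qpart m i"
  using assms unfolding Qpart_def by blast

theorem lemma2p2:
  fixes m :: int
  assumes "m \<ge> 1"
  shows "\<forall>i j v. 1 \<le> i \<and> i < j \<and> j \<le> m \<and> v \<in> unit_vecs \<longrightarrow>
           adjacent (translate (Qpart m i) (pscale (m + 2) v)) (Qpart m j)"
proof (intro allI impI)
  fix i j v
  assume h: "1 \<le> i \<and> i < j \<and> j \<le> m \<and> v \<in> unit_vecs"
  hence D: "translate (Qpart m i) (pscale (m + 2) v) \<inter> Qpart m j = {}"
    using disj assms by blast
  have v: "v \<in> {(1,0,0), (-1,0,0), (0,1,0), (0,-1,0), (0,0,1), (0,0,-1)}"
    using h unfolding unit_vecs_def by simp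
  have U: "(1,0,0) \<in> unit_vecs" "(-1,0,0) \<in> unit_vecs" "(0,1,0) \<in> unit_vecs"
    "(0,-1,0) \<in> unit_vecs" "(0,0,1) \<in> unit_vecs" "(0,0,-1) \<in> unit_vecs"
    unfolding unit_vecs_def by auto
  show "adjacent (translate (Qpart m i) (pscale (m + 2) v)) (Qpart m j)"
  proof -
    { fix p q e
      assume "p \<in> cube m" "fcol m p = i" "q \<in> cube m" "fcol m q = j" "e \<in> unit_vecs"
        "padd (padd p (pscale (m+2) v)) e = q"
      hence ?thesis
        by (intro adjI[OF D, of "padd p (pscale (m+2) v)" q e] trI inQ) auto }
    note K = this
    from v show ?thesis
    proof (elim insertE emptyE)
      assume "v = (1,0,0)"
      thus ?thesis using h assms
        by (intro K[of "(0,i,j)" "(m+1,i,j)" "(-1,0,0)"])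
           (auto simp: cube_def fcol_def padd_def pscale_def U)
    next
      assume "v = (-1,0,0)"
      thus ?thesis using h assms
        by (intro K[of "(m+1,j,i)" "(0,j,i)" "(1,0,0)"])
           (auto simp: cube_def fcol_def padd_def pscale_def U)
    next
      assume "v = (0,1,0)"
      thus ?thesis using h assms
        by (intro K[of "(i,0,j)" "(i,m+1,j)" "(0,-1,0)"])
           (auto simp: cube_def fcol_def padd_def pscale_def U)
    next
      assume "v = (0,-1,0)"
      thus ?thesis using h assms
        by (intro K[of "(j,m+1,i)" "(j,0,i)" "(0,1,0)"])
           (auto simp: cube_def fcol_def padd_def pscale_def U)
    next
      assume "v = (0,0,1)"
      thus ?thesis using h assms
        by (intro K[of "(j,i,0)" "(j,i,m+1)" "(0,0,-1)"])
           (auto simp: cube_def fcol_def padd_def pscale_def U)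
    next
      assume "v = (0,0,-1)"
      thus ?thesis using h assms
        by (intro K[of "(i,j,m+1)" "(i,j,0)" "(0,0,1)"])
           (auto simp: cube_def fcol_def padd_def pscale_def U)
    qed
  qed
qed

end
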